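(* Let $V$, $R$, the radius levels $r_1<\dots<r_k=R$, $G_R$ and $G_\alpha$ be as in the context, and let $0<\alpha\le 5\pi/6$. Then for all $u,v\in V$: $u$ and $v$ are connected by a path in $G_\alpha$ if and only if they are connected by a path in $G_R$.
   Context: Let $V$ be a finite set of pairwise distinct points (nodes) in the Euclidean plane, $d$ the Euclidean distance, and $R>0$. Let $G_R=(V,E)$ be the undirected graph with $E=\{\{u,v\}: u\neq v,\ d(u,v)\le R\}$. Fix a finite increasing sequence of radius levels $0<r_1<r_2<\dots<r_k=R$. For $u\in V$ and $1\le i\le k$ let $S_i(u)=\{v\in V\setminus\{u\}: d(u,v)\le r_i\}$. For $0<\alpha<2\pi$, a closed cone of width $\alpha$ with apex $u$ is a set $\{u+t(\cos\varphi,\sin\varphi): t\ge 0,\ \varphi\in[\theta-\alpha/2,\theta+\alpha/2]\}$ for some $\theta$; $\mathrm{cone}(u,\alpha,v)$ denotes the closed cone of width $\alpha$ with apex $u$ bisected by the ray from $u$ through $v$. A finite set $S\subseteq V\setminus\{u\}$ has an $\alpha$-gap (at $u$) if some closed cone of width $\alpha$ with apex $u$ contains no node of $S$ (in particular $\emptyset$ has an $\alpha$-gap). The algorithm CBTC($\alpha$) assigns to each $u$ the index $i_u$ = the least $i\in\{1,\dots,k\}$ such that $S_i(u)$ has no $\alpha$-gap, or $i_u=k$ if there is no such $i$; set $N_\alpha(u)=S_{i_u}(u)$ and $N_\alpha=\{(u,v): v\in N_\alpha(u)\}$. Let $E_\alpha=\{\{u,v\}: (u,v)\in N_\alpha \text{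 or } (v,u)\in N_\alpha\}$ (the symmetric closure of $N_\alpha$) and $G_\alpha=(V,E_\alpha)$. *)

theory Defs
  imports "HOL-Analysis.Analysis"
begin

text \<open>Points of the Euclidean plane are represented as complex numbers.\<close>

definition cone :: "complex \<Rightarrow> real \<Rightarrow> real \<Rightarrow> complex set" where
  "cone u \<alpha> \<theta> = {u + complex_of_real t * cis \<phi> | t \<phi>.
      t \<ge> 0 \<and> \<theta> - \<alpha>/2 \<le> \<phi> \<and> \<phi> \<le> \<theta> + \<alpha>/2}"

definition has_gap :: "complex \<Rightarrow> real \<Rightarrow> complex set \<Rightarrow> bool" where
  "has_gap u \<alpha> S \<longleftrightarrow> (\<exists>\<theta>. \<forall>v\<in>S. v \<notin> cone u \<alpha> \<theta>)"

text \<open>Radius levels r 1 < ... < r k = R; indices 1..k.\<close>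
definition S_level :: "complex set \<Rightarrow> (nat \<Rightarrow> real) \<Rightarrow> nat \<Rightarrow> complex \<Rightarrow> complex set" where
  "S_level V r i u = {v \<in> V - {u}. dist u v \<le> r i}"

definition cbtc_index :: "complex set \<Rightarrow> (nat \<Rightarrow> real) \<Rightarrow> nat \<Rightarrow> real \<Rightarrow> complex \<Rightarrow> nat" where
  "cbtc_index V r k \<alpha> u =
     (if \<exists>i\<in>{1..k}. \<not> has_gap u \<alpha> (S_level V r i u)
      then LEAST i. i \<in> {1..k} \<and> \<not> has_gap u \<alpha> (S_level V r i u)
      else k)"

definition N_alpha :: "complex set \<Rightarrow> (nat \<Rightarrow> real) \<Rightarrow> nat \<Rightarrow> real \<Rightarrow> complex \<Rightarrow> complex set" where
  "N_alpha V r k \<alpha> u = S_level V r (cbtc_index V r k \<alpha> u) u"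

definition edge_R :: "complex set \<Rightarrow> real \<Rightarrow> complex \<Rightarrow> complex \<Rightarrow> bool" where
  "edge_R V R u v \<longleftrightarrow> u \<in> V \<and> v \<in> V \<and> u \<noteq> v \<and> dist u v \<le> R"

definition edge_alpha :: "complex set \<Rightarrow> (nat \<Rightarrow> real) \<Rightarrow> nat \<Rightarrow> real \<Rightarrow> complex \<Rightarrow> complex \<Rightarrow> bool" where
  "edge_alpha V r k \<alpha> u v \<longleftrightarrow> u \<in> V \<and> v \<in> V \<and>
     (v \<in> N_alpha V r k \<alpha> u \<or> u \<in> N_alpha V r k \<alpha> v)"

end

theory Submission
  imports Defs
begin

lemma Re_Im_Arg:
  fixes z :: complex
  shows "Re z = cmod z * cos (Arg z)" "Im z = cmod z * sin (Arg z)"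
proof -
  have "z = rcis (cmod z) (Arg z)" by (simp add: rcis_cmod_Arg)
  then show "Re z = cmod z * cos (Arg z)" "Im z = cmod z * sin (Arg z)"
    by (metis Re_rcis, metis Im_rcis)
qed

lemma arg_bound:
  fixes z :: complex
  assumes "z \<noteq> 0" "cmod z < 1" "1 \<le> cmod (z - 1)"
  shows "2 * cos (Arg z) \<le> cmod z" "pi/3 < \<bar>Arg z\<bar>"
proof -
  define a where "a = cmod z"
  define p where "p = Arg z"
  have a0: "a > 0" using assms a_def by simp
  have re: "Re z = a * cos p" and im: "Im z = a * sin p" using Re_Im_Arg a_def p_def by auto
  have "1 \<le> (cmod (z - 1))^2" using assms(3) by (simp add: power_le_one_iff one_le_power)
  also have "(cmod (z - 1))^2 = (Re z - 1)^2 + (Im z)^2"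
    by (simp add: cmod_power2)
  also have "\<dots> = a^2 * ((sin p)^2 + (cos p)^2) - 2 * a * cos p + 1" unfolding re im
    by algebra
  also have "\<dots> = a^2 - 2 * a * cos p + 1" by simp
  finally have "2 * a * cos p \<le> a * a" by (simp add: power2_eq_square)
  then show c: "2 * cos (Arg z) \<le> cmod z" using a0 a_def p_def by (simp add: mult.commute mult.left_commute)
  show "pi/3 < \<bar>Arg z\<bar>"
  proof (rule ccontr)
    assume "\<not> pi/3 < \<bar>Arg z\<bar>"
    then have "cos (pi/3) \<le> cos \<bar>Arg z\<bar>"
      by (intro cos_monotone_0_pi_le) auto
    then have "1/2 \<le> cos (Arg z)" by (simp add: cos_60)
    then show False using c assms(2) by simp
  qed
qed

lemma quad_corners:
  fixes a b c c' kk :: real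
  assumes "0 < c" "c < 1/2" "0 < c'" "c' < 1/2"
    and "2 * c \<le> a" "a < 1" "2 * c' \<le> b" "b < 1"
    and F00: "kk < 0"
    and F10: "1 + 4 * c * kk - 2 * c' < 0"
    and F01: "1 + 4 * c' * kk - 2 * c < 0"
    and F11: "2 + 2 * kk - 2 * c - 2 * c' < 0"
  shows "a^2 + b^2 + 2 * a * b * kk - 2 * a * c - 2 * b * c' < 0"
proof -
  define F where "F = (\<lambda>a b. a^2 + b^2 + 2 * a * b * kk - 2 * a * c - 2 * b * c')"
  have e1: "(1-2 * c)  *  F a b = (1-a)  *  F (2 * c) b + (a-2 * c)  *  F 1 b + (1-2 * c) * (a-2 * c) * (a-1)"
    unfolding F_def by (simp add: power2_eq_square algebra_simps)
  have e2: "(1-2 * c')  *  F x b = (1-b)  *  F x (2 * c') + (b-2 * c')  *  F x 1 + (1-2 * c') * (b-2 * c') * (b-1)" for x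
    unfolding F_def by (simp add: power2_eq_square algebra_simps)
  have "F (2 * c) (2 * c') = 8 * c * c' * kk" unfolding F_def by (simp add: power2_eq_square algebra_simps)
  also have "\<dots> < 0" using assms by (simp add: mult_pos_neg)
  finally have c00: "F (2 * c) (2 * c') < 0" .
  have c10: "F (2 * c) 1 < 0" using F10 unfolding F_def by (simp add: power2_eq_square algebra_simps)
  have c01: "F 1 (2 * c') < 0" using F01 unfolding F_def by (simp add: power2_eq_square algebra_simps)
  have c11: "F 1 1 < 0" using F11 unfolding F_def by (simp add: power2_eq_square algebra_simps)
  have q2: "(1-2 * c') * (b-2 * c') * (b-1) \<le> 0"
    using assms by (intro mult_nonneg_nonpos) auto
  have "(1-2 * c')  *  F (2 * c) b < 0"
  proof -
    have "(1-b)  *  F (2 * c) (2 * c') < 0" using c00 assms by (simp add: mult_pos_neg)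
    moreover have "(b-2 * c')  *  F (2 * c) 1 \<le> 0" using c10 assms by (simp add: mult_nonneg_nonpos)
    ultimately show ?thesis using e2[of "2 * c"] q2 by linarith
  qed
  then have f0: "F (2 * c) b < 0" using assms by (simp add: mult_less_0_iff)
  have "(1-2 * c')  *  F 1 b < 0"
  proof -
    have "(1-b)  *  F 1 (2 * c') < 0" using c01 assms by (simp add: mult_pos_neg)
    moreover have "(b-2 * c')  *  F 1 1 \<le> 0" using c11 assms by (simp add: mult_nonneg_nonpos)
    ultimately show ?thesis using e2[of 1] q2 by linarith
  qed
  then have f1: "F 1 b < 0" using assms by (simp add: mult_less_0_iff)
  have q1: "(1-2 * c) * (a-2 * c) * (a-1) \<le> 0"
    using assms by (intro mult_nonneg_nonpos) auto
  have "(1-2 * c)  *  F a b < 0"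
  proof -
    have "(1-a)  *  F (2 * c) b < 0" using f0 assms by (simp add: mult_pos_neg)
    moreover have "(a-2 * c)  *  F 1 b \<le> 0" using f1 assms by (simp add: mult_nonneg_nonpos)
    ultimately show ?thesis using e1 q1 by linarith
  qed
  then have "F a b < 0" using assms by (simp add: mult_less_0_iff)
  then show ?thesis unfolding F_def .
qed

lemma trig_corners:
  fixes p q :: real
  assumes "pi/3 < p" "pi/3 < q" "p + q \<le> 5*pi/6"
  shows "cos p * cos q - sin p * sin q < 0"
    and "1 + 4 * cos p * (cos p * cos q - sin p * sin q) - 2 * cos q < 0"
    and "2 + 2 * (cos p * cos q - sin p * sin q) - 2 * cos p - 2 * cos q < 0"
    and "0 < cos p" "cos p < 1/2"
proof -
  have kk: "cos p * cos q - sin p * sin q = cos (p+q)" by (simp add: cos_add)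
  have "cos (p+q) < cos (pi/2)"
    using assms by (intro cos_monotone_0_pi) (auto simp: field_simps)
  then show "cos p * cos q - sin p * sin q < 0" using kk by simp
  have "4 * cos p * cos (p+q) = 2 * cos q + 2 * cos (2*p+q)"
  proof -
    have "cos p * cos (p+q) = (cos (p - (p+q)) + cos (p + (p+q))) / 2" by (rule cos_times_cos)
    moreover have "p - (p+q) = -q" "p + (p+q) = 2*p+q" by auto
    ultimately show ?thesis by simp
  qed
  moreover have "cos (2*p+q) < - 1/2"
  proof -
    have "cos (pi/3) < cos (2*p+q - pi)"
      using assms by (intro cos_monotone_0_pi) (auto simp: field_simps)
    moreover have "cos (2*p+q - pi) = - cos (2*p+q)" by (simp add: cos_diff)
    ultimately show ?thesis by (simp add: cos_60)
  qed
  ultimately show "1 + 4 * cos p * (cos p * cos q - sin p * sin q) - 2 * cos q < 0"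
    using kk by (simp add: algebra_simps)
  define m where "m = (p+q)/2"
  define h where "h = (p-q)/2"
  have pm: "p = m + h" "q = m - h" unfolding m_def h_def by (auto simp: field_simps)
  have "cos p + cos q = 2 * cos m * cos h" unfolding pm by (simp add: cos_add cos_diff)
  moreover have "1 + cos (p+q) = 2 * (cos m)^2"
  proof -
    have "p + q = 2 * m" unfolding m_def by simp
    then show ?thesis using cos_double_cos[of m] by simp
  qed
  moreover have "0 < cos m" using assms unfolding m_def by (intro cos_gt_zero_pi) auto
  moreover have "cos m < cos h"
  proof -
    have "cos m < cos \<bar>h\<bar>" using assms unfolding m_def h_def
      by (intro cos_monotone_0_pi) (auto simp: field_simps)
    then show ?thesis by simp
  qed
  ultimately have "1 + cos (p+q) < cos p + cos q"
    by (simp add: power2_eq_square mult_strict_left_mono)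
  then show "2 + 2 * (cos p * cos q - sin p * sin q) - 2 * cos p - 2 * cos q < 0"
    using kk by simp
  show "0 < cos p" using assms by (intro cos_gt_zero_pi) auto
  have "cos p < cos (pi/3)" using assms by (intro cos_monotone_0_pi) auto
  then show "cos p < 1/2" by (simp add: cos_60)
qed

lemma key_lemma:
  fixes w t :: complex
  assumes "w \<noteq> 0" "cmod w < 1" "1 \<le> cmod (w - 1)"
    and "t \<noteq> 0" "cmod t < 1" "1 \<le> cmod (t - 1)"
    and "0 < Arg w" "Arg t < 0" "Arg w - Arg t \<le> 5*pi/6"
  shows "cmod (w + t - 1) < 1"
proof -
  define a where "a = cmod w"
  define b where "b = cmod t"
  define p where "p = Arg w"
  define q where "q = - Arg t"
  have rw: "Re w = a * cos p" "Im w = a * sin p" using Re_Im_Arg a_def p_def by auto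
  have rt: "Re t = b * cos q" "Im t = - b * sin q" using Re_Im_Arg[of t] b_def q_def by auto
  have p3: "pi/3 < p" using arg_bound(2)[OF assms(1-3)] assms(7) p_def by simp
  have q3: "pi/3 < q" using arg_bound(2)[OF assms(4-6)] assms(8) q_def by simp
  have pq: "p + q \<le> 5*pi/6" using assms(9) p_def q_def by simp
  have a2: "2 * cos p \<le> a" using arg_bound(1)[OF assms(1-3)] a_def p_def by simp
  have b2: "2 * cos q \<le> b" using arg_bound(1)[OF assms(4-6)] b_def q_def by simp
  note T1 = trig_corners[OF p3 q3 pq]
  have pq': "q + p \<le> 5*pi/6" using pq by simp
  note T2 = trig_corners[OF q3 p3 pq']
  define kk where "kk = cos p * cos q - sin p * sin q"
  have kk': "cos q * cos p - sin q * sin p = kk" unfolding kk_def by simp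
  have main: "a^2 + b^2 + 2*a*b*kk - 2*a*cos p - 2*b*cos q < 0"
    apply (rule quad_corners)
    using T1 T2 a2 b2 assms(2,5) a_def b_def kk' unfolding kk_def by auto
  have "(cmod (w + t - 1))^2 = (Re w + Re t - 1)^2 + (Im w + Im t)^2"
    by (simp add: cmod_power2)
  also have "\<dots> = a^2 * ((sin p)^2 + (cos p)^2) + b^2 * ((sin q)^2 + (cos q)^2) + 1
      + 2*a*b*kk - 2*a*cos p - 2*b*cos q"
    unfolding rw rt kk_def by algebra
  also have "\<dots> < 1" using main by simp
  finally have "(cmod (w + t - 1))^2 < 1" .
  then show ?thesis by (simp add: power_less_one_iff)
qed

lemma gap_sides:
  fixes A :: "complex set" and \<alpha> :: real
  assumes fin: "finite A" and cov: "\<forall>\<theta>. \<exists>z\<in>A. z \<in> cone 0 \<alpha> \<theta>"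
    and ang: "\<forall>z\<in>A. z \<noteq> 0 \<and> pi/3 < \<bar>Arg z\<bar>" and al: "\<alpha> \<le> 5*pi/6"
  shows "\<exists>z1\<in>A. \<exists>z2\<in>A. 0 < Arg z1 \<and> Arg z2 < 0 \<and> Arg z1 - Arg z2 \<le> \<alpha>"
proof -
  define P where "P = Arg ` {z\<in>A. 0 < Arg z}"
  define Q where "Q = (\<lambda>z. - Arg z) ` {z\<in>A. Arg z < 0}"
  define p where "p = (if P = {} then pi else Min P)"
  define q where "q = (if Q = {} then pi else Min Q)"
  have fP: "finite P" "finite Q" using fin unfolding P_def Q_def by auto
  have Pb: "x \<le> pi \<and> pi/3 < x" if "x \<in> P" for x
  proof -
    from that obtain z where "z \<in> A" "0 < Arg z" "x = Arg z" unfolding P_def by auto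
    then show ?thesis using ang Arg_le_pi[of z] by auto
  qed
  have Qb: "x < pi \<and> pi/3 < x" if "x \<in> Q" for x
  proof -
    from that obtain z where "z \<in> A" "Arg z < 0" "x = - Arg z" unfolding Q_def by auto
    then show ?thesis using ang mpi_less_Arg[of z] by auto
  qed
  have pb: "p \<le> pi \<and> pi/3 < p"
  proof (cases "P = {}")
    case True then show ?thesis unfolding p_def by simp
  next
    case False then show ?thesis unfolding p_def using Min_in[OF fP(1) False] Pb by auto
  qed
  have qb: "q \<le> pi \<and> pi/3 < q"
  proof (cases "Q = {}")
    case True then show ?thesis unfolding q_def by simp
  next
    case False then show ?thesis unfolding q_def using Min_in[OF fP(2) False] Qb[of "Min Q"] by auto
  qed
  have pqa: "p + q \<le> \<alpha>"
  proof (rule ccontr)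
    assume "\<not> p + q \<le> \<alpha>"
    then have lt: "\<alpha> < p + q" by simp
    obtain z where zA: "z \<in> A" and zc: "z \<in> cone 0 \<alpha> ((p - q)/2)" using cov by blast
    then obtain t \<phi> where z: "z = of_real t * cis \<phi>" and t0: "t \<ge> 0"
      and ph: "(p-q)/2 - \<alpha>/2 \<le> \<phi>" "\<phi> \<le> (p-q)/2 + \<alpha>/2"
      unfolding cone_def by auto
    have "z \<noteq> 0" using ang zA by auto
    then have "t \<noteq> 0" using z by auto
    then have t1: "t > 0" using t0 by simp
    have php: "\<phi> < p" "- q < \<phi>" using ph lt by (auto simp: field_simps)
    have "Arg z = \<phi>"
      using t1 php pb qb by (intro Arg_unique'[of t]) (auto simp: z rcis_def)
    show False
    proof (cases "0 < \<phi>")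
      case True
      then have "\<phi> \<in> P" unfolding P_def using zA \<open>Arg z = \<phi>\<close> by force
      then have "P \<noteq> {}" "Min P \<le> \<phi>" using fP by auto
      then show False using php unfolding p_def by simp
    next
      case False
      show False
      proof (cases "\<phi> < 0")
        case True
        then have "- \<phi> \<in> Q" unfolding Q_def using zA \<open>Arg z = \<phi>\<close> by force
        then have "Q \<noteq> {}" "Min Q \<le> - \<phi>" using fP by auto
        then show False using php unfolding q_def by simp
      next
        case False
        then have "\<phi> = 0" using \<open>\<not> 0 < \<phi>\<close> by simp
        then show False using ang zA \<open>Arg z = \<phi>\<close> by auto
      qed
    qed
  qed
  have "P \<noteq> {}"
  proof
    assume "P = {}" then have "p = pi" unfolding p_def by simp
    then show False using pqa qb al pi_gt_zero by linarith
  qed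
  have "Q \<noteq> {}"
  proof
    assume "Q = {}" then have "q = pi" unfolding q_def by simp
    then show False using pqa pb al pi_gt_zero by linarith
  qed
  have "p \<in> P" using Min_in[OF fP(1) \<open>P \<noteq> {}\<close>] \<open>P \<noteq> {}\<close> unfolding p_def by simp
  then obtain z1 where z1: "z1 \<in> A" "0 < Arg z1" "Arg z1 = p"
    unfolding P_def by auto
  have "q \<in> Q" using Min_in[OF fP(2) \<open>Q \<noteq> {}\<close>] \<open>Q \<noteq> {}\<close> unfolding q_def by simp
  then obtain z2 where z2: "z2 \<in> A" "Arg z2 < 0" "- Arg z2 = q"
    unfolding Q_def by auto
  show ?thesis using z1 z2 pqa by force
qed

definition nf :: "complex \<Rightarrow> complex \<Rightarrow> complex \<Rightarrow> complex" where
  "nf x y z = (z - x) / (y - x)"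

lemma nf_swap: "x \<noteq> y \<Longrightarrow> nf y x z = 1 - nf x y z"
  unfolding nf_def by (simp add: field_simps)

lemma nf_dist: "x \<noteq> y \<Longrightarrow> cmod (nf x y z - nf x y z') = dist z z' / dist x y"
proof -
  assume "x \<noteq> y"
  have "nf x y z - nf x y z' = (z - z') / (y - x)" unfolding nf_def by (simp add: diff_divide_distrib)
  then show ?thesis by (simp add: norm_divide dist_norm norm_minus_commute)
qed

lemma nf_x: "nf x y x = 0" unfolding nf_def by simp
lemma nf_y: "x \<noteq> y \<Longrightarrow> nf x y y = 1" unfolding nf_def by simp

lemma cone_normalize:
  assumes "x \<noteq> y" "\<not> has_gap x \<alpha> A"
  shows "\<forall>\<theta>. \<exists>w\<in>A. nf x y w \<in> cone 0 \<alpha> \<theta>"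
proof
  fix \<theta>
  define d where "d = cmod (y - x)"
  define \<theta>0 where "\<theta>0 = Arg (y - x)"
  have d0: "d > 0" using assms(1) d_def by simp
  have yx: "y - x = of_real d * cis \<theta>0"
    using rcis_cmod_Arg[of "y - x"] unfolding d_def \<theta>0_def rcis_def by simp
  from assms(2) obtain w where wA: "w \<in> A" and wc: "w \<in> cone x \<alpha> (\<theta> + \<theta>0)"
    unfolding has_gap_def by blast
  then obtain t \<phi> where w: "w = x + of_real t * cis \<phi>" and t0: "t \<ge> 0"
    and ph: "\<theta> + \<theta>0 - \<alpha>/2 \<le> \<phi>" "\<phi> \<le> \<theta> + \<theta>0 + \<alpha>/2"
    unfolding cone_def by auto
  have "nf x y w = (of_real t * cis \<phi>) / (of_real d * cis \<theta>0)"
    unfolding nf_def w yx by simp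
  also have "\<dots> = of_real (t/d) * cis (\<phi> - \<theta>0)"
    using d0 by (simp add: cis_divide[symmetric] field_simps)
  finally have "nf x y w = 0 + of_real (t/d) * cis (\<phi> - \<theta>0)" by simp
  moreover have "t/d \<ge> 0" using t0 d0 by simp
  ultimately have "nf x y w \<in> cone 0 \<alpha> \<theta>"
    unfolding cone_def using ph by fastforce
  then show "\<exists>w\<in>A. nf x y w \<in> cone 0 \<alpha> \<theta>" using wA by blast
qed

lemma side_facts:
  assumes "x \<noteq> y" "w \<noteq> x" "dist x w < dist x y" "dist x y \<le> dist w y"
  shows "nf x y w \<noteq> 0" "cmod (nf x y w) < 1" "1 \<le> cmod (nf x y w - 1)"
proof -
  have dp: "dist x y > 0" using assms by simp
  show "nf x y w \<noteq> 0" using assms unfolding nf_def by simp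
  have "cmod (nf x y w) = cmod (nf x y w - nf x y x)" by (simp add: nf_x)
  also have "\<dots> = dist w x / dist x y" using nf_dist[OF assms(1)] by simp
  finally show "cmod (nf x y w) < 1" using assms dp by (simp add: dist_commute)
  have "cmod (nf x y w - 1) = cmod (nf x y w - nf x y y)" by (simp add: nf_y assms)
  also have "\<dots> = dist w y / dist x y" using nf_dist[OF assms(1)] by simp
  finally show "1 \<le> cmod (nf x y w - 1)" using assms dp by simp
qed

lemma geo:
  assumes xy: "x \<noteq> y" and fA: "finite A" and fB: "finite B"
    and A: "\<forall>w\<in>A. w \<noteq> x \<and> dist x w < dist x y"
    and B: "\<forall>t\<in>B. t \<noteq> y \<and> dist y t < dist x y"
    and gA: "\<not> has_gap x \<alpha> A" and gB: "\<not> has_gap y \<alpha> B"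
    and al: "\<alpha> \<le> 5*pi/6"
  shows "\<exists>z1\<in>insert x A. \<exists>z2\<in>insert y B. dist z1 z2 < dist x y"
proof (rule ccontr)
  assume "\<not> ?thesis"
  then have H: "\<And>z1 z2. z1 \<in> insert x A \<Longrightarrow> z2 \<in> insert y B \<Longrightarrow> dist x y \<le> dist z1 z2"
    by force
  have yx: "y \<noteq> x" using xy by simp
  have dxy: "dist y x = dist x y" by (simp add: dist_commute)
  have FA: "nf x y w \<noteq> 0 \<and> cmod (nf x y w) < 1 \<and> 1 \<le> cmod (nf x y w - 1)" if "w \<in> A" for w
    using side_facts[OF xy, of w] A H[of w y] that by auto
  have FB: "nf y x t \<noteq> 0 \<and> cmod (nf y x t) < 1 \<and> 1 \<le> cmod (nf y x t - 1)" if "t \<in> B" for t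
    using side_facts[OF yx, of t] B H[of x t] that dxy by (auto simp: dist_commute)
  have "\<exists>z1\<in>nf x y ` A. \<exists>z2\<in>nf x y ` A. 0 < Arg z1 \<and> Arg z2 < 0 \<and> Arg z1 - Arg z2 \<le> \<alpha>"
  proof (rule gap_sides)
    show "finite (nf x y ` A)" using fA by simp
    show "\<forall>\<theta>. \<exists>z\<in>nf x y ` A. z \<in> cone 0 \<alpha> \<theta>" using cone_normalize[OF xy gA] by blast
    show "\<forall>z\<in>nf x y ` A. z \<noteq> 0 \<and> pi / 3 < \<bar>Arg z\<bar>"
    proof
      fix z assume "z \<in> nf x y ` A"
      then obtain w where "w \<in> A" "z = nf x y w" by blast
      then show "z \<noteq> 0 \<and> pi / 3 < \<bar>Arg z\<bar>" using FA[of w] arg_bound(2)[of z] by simp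
    qed
  qed (rule al)
  then obtain w1 w2 where w: "w1 \<in> A" "w2 \<in> A" "0 < Arg (nf x y w1)" "Arg (nf x y w2) < 0"
    "Arg (nf x y w1) - Arg (nf x y w2) \<le> \<alpha>" by blast
  have "\<exists>z1\<in>nf y x ` B. \<exists>z2\<in>nf y x ` B. 0 < Arg z1 \<and> Arg z2 < 0 \<and> Arg z1 - Arg z2 \<le> \<alpha>"
  proof (rule gap_sides)
    show "finite (nf y x ` B)" using fB by simp
    show "\<forall>\<theta>. \<exists>z\<in>nf y x ` B. z \<in> cone 0 \<alpha> \<theta>" using cone_normalize[OF yx gB] by blast
    show "\<forall>z\<in>nf y x ` B. z \<noteq> 0 \<and> pi / 3 < \<bar>Arg z\<bar>"
    proof
      fix z assume "z \<in> nf y x ` B"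
      then obtain t where "t \<in> B" "z = nf y x t" by blast
      then show "z \<noteq> 0 \<and> pi / 3 < \<bar>Arg z\<bar>" using FB[of t] arg_bound(2)[of z] by simp
    qed
  qed (rule al)
  then obtain t3 t4 where t: "t3 \<in> B" "t4 \<in> B" "0 < Arg (nf y x t3)" "Arg (nf y x t4) < 0"
    "Arg (nf y x t3) - Arg (nf y x t4) \<le> \<alpha>" by blast
  have dp: "dist x y > 0" using xy by simp
  show False
  proof (cases "Arg (nf x y w1) - Arg (nf y x t4) \<le> 5*pi/6")
    case True
    have "cmod (nf x y w1 + nf y x t4 - 1) < 1"
      using key_lemma[OF _ _ _ _ _ _ w(3) t(4) True] FA[OF w(1)] FB[OF t(2)] by blast
    moreover have "nf x y w1 + nf y x t4 - 1 = nf x y w1 - nf x y t4" using nf_swap[OF xy] by simp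
    ultimately have "dist w1 t4 / dist x y < 1" using nf_dist[OF xy] by simp
    then have "dist w1 t4 < dist x y" using dp by simp
    then show False using H[of w1 t4] w t by auto
  next
    case False
    then have True: "Arg (nf y x t3) - Arg (nf x y w2) \<le> 5*pi/6" using w t al by linarith
    have "cmod (nf y x t3 + nf x y w2 - 1) < 1"
      using key_lemma[OF _ _ _ _ _ _ t(3) w(4) True] FA[OF w(2)] FB[OF t(1)] by blast
    moreover have "nf y x t3 + nf x y w2 - 1 = nf y x t3 - nf y x w2" using nf_swap[OF yx] by simp
    ultimately have "dist t3 w2 / dist y x < 1" using nf_dist[OF yx] by simp
    then have "dist w2 t3 < dist x y" using dp by (simp add: dist_commute)
    then show False using H[of w2 t3] w t by auto
  qed
qed

lemma idx_range:
  assumes "k \<ge> 1"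
  shows "1 \<le> cbtc_index V r k \<alpha> u \<and> cbtc_index V r k \<alpha> u \<le> k"
proof (cases "\<exists>i\<in>{1..k}. \<not> has_gap u \<alpha> (S_level V r i u)")
  case True
  then have "\<exists>i. i \<in> {1..k} \<and> \<not> has_gap u \<alpha> (S_level V r i u)" by blast
  from LeastI_ex[OF this] True show ?thesis unfolding cbtc_index_def by auto
next
  case False
  then show ?thesis unfolding cbtc_index_def using assms by auto
qed

lemma N_props:
  assumes "k \<ge> 1" "\<And>i j. 1 \<le> i \<Longrightarrow> i < j \<Longrightarrow> j \<le> k \<Longrightarrow> r i < r j"
    and "z \<in> N_alpha V r k \<alpha> u"
  shows "z \<in> V \<and> z \<noteq> u \<and> dist u z \<le> r k"
proof -
  define i where "i = cbtc_index V r k \<alpha> u"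
  have i: "1 \<le> i" "i \<le> k" using idx_range[OF assms(1)] i_def by auto
  have "r i \<le> r k"
  proof (cases "i = k")
    case False then show ?thesis using assms(2)[of i k] i by simp
  qed simp
  then show ?thesis using assms(3) unfolding N_alpha_def S_level_def i_def[symmetric] by auto
qed

lemma nogap:
  assumes "y \<in> V" "y \<noteq> x" "dist x y \<le> r k" "y \<notin> N_alpha V r k \<alpha> x"
  shows "\<not> has_gap x \<alpha> (N_alpha V r k \<alpha> x) \<and> (\<forall>z\<in>N_alpha V r k \<alpha> x. dist x z < dist x y)"
proof (cases "\<exists>i\<in>{1..k}. \<not> has_gap x \<alpha> (S_level V r i x)")
  case True
  define i where "i = (LEAST i. i \<in> {1..k} \<and> \<not> has_gap x \<alpha> (S_level V r i x))"
  have "\<exists>i. i \<in> {1..k} \<and> \<not> has_gap x \<alpha> (S_level V r i x)" using True by blast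
  from LeastI_ex[OF this] have g: "\<not> has_gap x \<alpha> (S_level V r i x)" unfolding i_def by blast
  have N: "N_alpha V r k \<alpha> x = S_level V r i x"
    unfolding N_alpha_def cbtc_index_def i_def using True by simp
  have "\<not> dist x y \<le> r i" using assms(1,2,4) unfolding N S_level_def by auto
  then show ?thesis using g unfolding N S_level_def by auto
next
  case False
  then have N: "N_alpha V r k \<alpha> x = S_level V r k x"
    unfolding N_alpha_def cbtc_index_def by simp
  then show ?thesis using assms unfolding S_level_def by auto
qed

theorem theorem1:
  fixes V :: "complex set" and R \<alpha> :: real and r :: "nat \<Rightarrow> real" and k :: nat
  assumes "finite V"
    and "R > 0"
    and "k \<ge> 1"
    and "r 1 > 0"
    and "\<And>i j. 1 \<le> i \<Longrightarrow> i < j \<Longrightarrow> j \<le> k \<Longrightarrow> r i < r j"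
    and "r k = R"
    and "0 < \<alpha>" and "\<alpha> \<le> 5 * pi / 6"
    and "u \<in> V" and "v \<in> V"
  shows "(edge_alpha V r k \<alpha>)\<^sup>*\<^sup>* u v \<longleftrightarrow> (edge_R V R)\<^sup>*\<^sup>* u v"
proof -
  let ?E = "edge_alpha V r k \<alpha>"
  let ?N = "N_alpha V r k \<alpha>"
  have Np: "z \<in> V \<and> z \<noteq> x \<and> dist x z \<le> R" if "z \<in> ?N x" for z x
    using N_props[of k r z V \<alpha> x, OF assms(3) assms(5) that] assms(6) by simp
  have fwd: "?E a b \<Longrightarrow> edge_R V R a b" for a b
  proof -
    assume e: "?E a b"
    show ?thesis
    proof (cases "b \<in> ?N a")
      case True then show ?thesis using Np[OF True] e
        unfolding edge_R_def edge_alpha_def by auto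
    next
      case False
      then have "a \<in> ?N b" using e unfolding edge_alpha_def by auto
      from Np[OF this] show ?thesis using e
        unfolding edge_R_def edge_alpha_def by (auto simp: dist_commute)
    qed
  qed
  have sym: "?E a b \<Longrightarrow> ?E b a" for a b unfolding edge_alpha_def by auto
  let ?S = "\<lambda>a b. {p \<in> V \<times> V. dist (fst p) (snd p) < dist a b}"
  have main: "\<forall>a b. card (?S a b) = n \<longrightarrow> a \<in> V \<longrightarrow> b \<in> V \<longrightarrow> dist a b \<le> R \<longrightarrow> ?E\<^sup>*\<^sup>* a b" for n
  proof (induction n rule: less_induct)
    case (less n)
    show ?case
    proof (intro allI impI)
      fix a b assume cn: "card (?S a b) = n" and aV: "a \<in> V" and bV: "b \<in> V" and dR: "dist a b \<le> R"
      show "?E\<^sup>*\<^sup>* a b"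
      proof (cases "a = b \<or> ?E a b")
        case True then show ?thesis by auto
      next
        case False
        then have ab: "a \<noteq> b" and nb: "b \<notin> ?N a" and na: "a \<notin> ?N b"
          using aV bV unfolding edge_alpha_def by auto
        have NA: "\<not> has_gap a \<alpha> (?N a) \<and> (\<forall>z\<in>?N a. dist a z < dist a b)"
          using nogap[of b V a r k \<alpha>] bV ab dR nb assms(6) by auto
        have NB: "\<not> has_gap b \<alpha> (?N b) \<and> (\<forall>z\<in>?N b. dist b z < dist b a)"
          using nogap[of a V b r k \<alpha>] aV ab dR na assms(6) by (auto simp: dist_commute)
        have subA: "?N a \<subseteq> V" "?N b \<subseteq> V" using Np by auto
        have "\<exists>z1\<in>insert a (?N a). \<exists>z2\<in>insert b (?N b). dist z1 z2 < dist a b"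
        proof (rule geo)
          show "a \<noteq> b" by fact
          show "finite (?N a)" "finite (?N b)" using subA assms(1) finite_subset by auto
          show "\<forall>w\<in>?N a. w \<noteq> a \<and> dist a w < dist a b" using NA Np by blast
          show "\<forall>t\<in>?N b. t \<noteq> b \<and> dist b t < dist a b" using NB Np
            by (auto simp: dist_commute)
          show "\<not> has_gap a \<alpha> (?N a)" "\<not> has_gap b \<alpha> (?N b)" using NA NB by auto
        qed (rule assms(8))
        then obtain z1 z2 where z1: "z1 \<in> insert a (?N a)" and z2: "z2 \<in> insert b (?N b)"
          and dz: "dist z1 z2 < dist a b" by blast
        have z1V: "z1 \<in> V" and z2V: "z2 \<in> V" using z1 z2 subA aV bV by auto
        have e1: "?E\<^sup>*\<^sup>* a z1"
        proof (cases "z1 = a")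
          case False then have "?E a z1" using z1 aV z1V unfolding edge_alpha_def by auto
          then show ?thesis by auto
        qed simp
        have e2: "?E\<^sup>*\<^sup>* z2 b"
        proof (cases "z2 = b")
          case False then have "?E z2 b" using z2 bV z2V unfolding edge_alpha_def by auto
          then show ?thesis by auto
        qed simp
        have "?S z1 z2 \<subset> ?S a b"
        proof
          show "?S z1 z2 \<subseteq> ?S a b" using dz by auto
          have "(z1, z2) \<in> ?S a b" "(z1, z2) \<notin> ?S z1 z2" using dz z1V z2V by auto
          then show "?S z1 z2 \<noteq> ?S a b" by blast
        qed
        moreover have "finite (?S a b)" using assms(1) by simp
        ultimately have "card (?S z1 z2) < card (?S a b)" by (intro psubset_card_mono)
        then have "card (?S z1 z2) < n" using cn by simp
        then have e3: "?E\<^sup>*\<^sup>* z1 z2" using less z1V z2V dz dR by auto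
        show ?thesis using e1 e3 e2 by (meson rtranclp_trans)
      qed
    qed
  qed
  show ?thesis
  proof
    assume "?E\<^sup>*\<^sup>* u v"
    then show "(edge_R V R)\<^sup>*\<^sup>* u v"
      by (induction rule: rtranclp_induct) (auto intro: rtranclp.rtrancl_into_rtrancl fwd)
  next
    assume "(edge_R V R)\<^sup>*\<^sup>* u v"
    then show "?E\<^sup>*\<^sup>* u v"
    proof (induction rule: rtranclp_induct)
      case (step y z)
      then have "?E\<^sup>*\<^sup>* y z" using main unfolding edge_R_def by auto
      then show ?case using step.IH by (meson rtranclp_trans)
    qed simp
  qed
qed

end
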